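(* Suppose the flow space $\mathbb X$ admits an expansion $(X_i,f_i,p_i)$ about some point $x_\bullet$. If there is $n\in\mathbb Z^+$ such that for every $m>n$ the composite positive map $f_{n,m}=f_n\circ\cdots\circ f_{m-1}\colon X_m\to X_n$ is degenerate proper, then $\mathbb X$ contains a periodic orbit (an orbit homeomorphic to a circle).
   Context: A flow space is a compact metrizable space $\mathbb X$ of topological dimension one with a continuous $\mathbb R$-action $(t,x)\mapsto t.x$ without fixed points. Oriented wedge of circles: one-point union of finitely many circles, each with a chosen orientation. A positive map between oriented wedges of circles is a continuous surjection sending wedge point to wedge point, preserving the orientation of each circle and locally injective away from the wedge point. A projection $p\colon\mathbb X\to W$ onto an oriented wedge is a continuous surjection, locally injective and orientation preserving along orbits. An expansion of $\mathbb X$ about $x_\bullet$: oriented wedges $X_i$ with wedge points $x_i$, positive maps $f_i\colon X_{i+1}\to X_i$, projections $p_i\colon\mathbb X\to X_i$ with $p_i(x_\bullet)=x_i$, $p_n=f_{n,m}\circ p_m$ for $m>n$, and $x\mapsto (p_i(x))_i$ a homeomorphism of $\mathbb X$ onto $\varprojlim(X_i,f_i)$. Symbolic representation: label the circles of the target wedge by letters of an alphabet $\mathcal A$ and those of the source by letters of $\mathcal B$; for a positive map $f$ and $b\in\mathcal B$, $f_s(b)\in\mathcal A^*$ is the word listing in order the circles traversed by the image of circle $b$ traversed once positively from the wedge point. A positive map is degenerate proper if there is a letter $a$ such that every $f_s(b)$ begins and ends with $a$, and $f_s(b)=a$ for at least one $b$. *)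

theory Defs
  imports "HOL-Analysis.Analysis"
begin

definition cover_dim_le :: "'a::topological_space set \<Rightarrow> nat \<Rightarrow> bool" where
  "cover_dim_le X n \<longleftrightarrow>
     (\<forall>\<U>. finite \<U> \<and> (\<forall>U\<in>\<U>. openin (top_of_set X) U) \<and> X \<subseteq> \<Union>\<U> \<longrightarrow>
        (\<exists>\<V>. finite \<V> \<and> (\<forall>V\<in>\<V>. openin (top_of_set X) V) \<and> X \<subseteq> \<Union>\<V> \<and>
             (\<forall>V\<in>\<V>. \<exists>U\<in>\<U>. V \<subseteq> U) \<and>
             (\<forall>x\<in>X. card {V\<in>\<V>. x \<in> V} \<le> n + 1)))"

definition topological_dim_one :: "'a::topological_space set \<Rightarrow> bool" where
  "topological_dim_one X \<longleftrightarrow> cover_dim_le X 1 \<and> \<not> cover_dim_le X 0"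

text \<open>A flow space: compact subset X of a metric space (hence compact metrizable),
of topological dimension one, with a continuous R-action phi without fixed points.\<close>
definition flow_space :: "'a::metric_space set \<Rightarrow> (real \<Rightarrow> 'a \<Rightarrow> 'a) \<Rightarrow> bool" where
  "flow_space X \<phi> \<longleftrightarrow>
     compact X \<and> topological_dim_one X \<and>
     continuous_on (UNIV \<times> X) (\<lambda>(t, x). \<phi> t x) \<and>
     (\<forall>t. \<forall>x\<in>X. \<phi> t x \<in> X) \<and>
     (\<forall>x\<in>X. \<phi> 0 x = x) \<and>
     (\<forall>s t. \<forall>x\<in>X. \<phi> (s + t) x = \<phi> s (\<phi> t x)) \<and>
     (\<forall>x\<in>X. \<exists>t. \<phi> t x \<noteq> x)"

definition orbit :: "(real \<Rightarrow> 'a \<Rightarrow> 'a) \<Rightarrow> 'a \<Rightarrow> 'a set" where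
  "orbit \<phi> x = range (\<lambda>t. \<phi> t x)"

text \<open>Circle number a (a \<ge> 1) is the circle of radius a centred at a in the complex plane,
parametrised (with period 1, positively) so that parameter 0 is the wedge point 0.
Distinct such circles meet exactly in 0, so for a finite nonempty set A of positive
naturals, the union is an oriented wedge of card A circles with wedge point 0.
Every oriented wedge of finitely many circles is orientation-preservingly
homeomorphic to such a model.\<close>
definition wcirc :: "nat \<Rightarrow> real \<Rightarrow> complex" where
  "wcirc a \<theta> = of_nat a * (1 - cis (2 * pi * \<theta>))"

definition circle_of :: "nat \<Rightarrow> complex set" where
  "circle_of a = range (wcirc a)"

definition wedge :: "nat set \<Rightarrow> complex set" where
  "wedge A = (\<Union>a\<in>A. circle_of a)"

definition wedge_labels :: "nat set \<Rightarrow> bool" where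
  "wedge_labels A \<longleftrightarrow> finite A \<and> A \<noteq> {} \<and> 0 \<notin> A"

text \<open>A path g : R \<rightarrow> wedge A is locally injective and orientation preserving:
near every time t0 it is injective, and on each side of t0 it runs inside a single
circle along a continuous strictly increasing parameter.\<close>
definition locally_positive :: "nat set \<Rightarrow> (real \<Rightarrow> complex) \<Rightarrow> bool" where
  "locally_positive A g \<longleftrightarrow>
     (\<forall>t0. \<exists>e>0. inj_on g {t0 - e<..<t0 + e} \<and>
        (\<exists>a\<in>A. \<exists>\<theta>. continuous_on {t0 - e..t0} \<theta> \<and> strict_mono_on {t0 - e..t0} \<theta> \<and>
                 (\<forall>t\<in>{t0 - e..t0}. g t = wcirc a (\<theta> t))) \<and>
        (\<exists>b\<in>A. \<exists>\<theta>. continuous_on {t0..t0 + e} \<theta> \<and> strict_mono_on {t0..t0 + e} \<theta> \<and>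
                 (\<forall>t\<in>{t0..t0 + e}. g t = wcirc b (\<theta> t))))"

definition positive_map :: "nat set \<Rightarrow> nat set \<Rightarrow> (complex \<Rightarrow> complex) \<Rightarrow> bool" where
  "positive_map A B f \<longleftrightarrow>
     continuous_on (wedge B) f \<and> f ` wedge B = wedge A \<and> f 0 = 0 \<and>
     (\<forall>b\<in>B. locally_positive A (\<lambda>\<theta>. f (wcirc b \<theta>)))"

text \<open>Symbolic representation: sym_word f b w says that w is the word f_s(b), i.e. the
list of circles of the target traversed by the image of circle b traversed once
positively from the wedge point.\<close>
definition sym_word :: "(complex \<Rightarrow> complex) \<Rightarrow> nat \<Rightarrow> nat list \<Rightarrow> bool" where
  "sym_word f b w \<longleftrightarrow>
     (\<exists>s::nat \<Rightarrow> real. s 0 = 0 \<and> s (length w) = 1 \<and>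
        (\<forall>j<length w. s j < s (Suc j)) \<and>
        (\<forall>j\<le>length w. f (wcirc b (s j)) = 0) \<and>
        (\<forall>j<length w. \<forall>\<theta>\<in>{s j<..<s (Suc j)}. f (wcirc b \<theta>) \<in> circle_of (w ! j) - {0}))"

definition degenerate_proper :: "nat set \<Rightarrow> nat set \<Rightarrow> (complex \<Rightarrow> complex) \<Rightarrow> bool" where
  "degenerate_proper A B f \<longleftrightarrow>
     (\<exists>a\<in>A. (\<forall>b\<in>B. \<exists>w. sym_word f b w \<and> w \<noteq> [] \<and> hd w = a \<and> last w = a) \<and>
            (\<exists>b\<in>B. sym_word f b [a]))"

text \<open>fcomp f n k = f_{n,n+k} = f n \<circ> ... \<circ> f (n+k-1).\<close>
fun fcomp :: "(nat \<Rightarrow> 'b \<Rightarrow> 'b) \<Rightarrow> nat \<Rightarrow> nat \<Rightarrow> 'b \<Rightarrow> 'b" where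
  "fcomp f n 0 = id"
| "fcomp f n (Suc k) = fcomp f n k \<circ> f (n + k)"

definition projection :: "'a::topological_space set \<Rightarrow> (real \<Rightarrow> 'a \<Rightarrow> 'a) \<Rightarrow> nat set \<Rightarrow> ('a \<Rightarrow> complex) \<Rightarrow> bool" where
  "projection X \<phi> A p \<longleftrightarrow>
     continuous_on X p \<and> p ` X = wedge A \<and>
     (\<forall>x\<in>X. locally_positive A (\<lambda>t. p (\<phi> t x)))"

definition inv_limit :: "(nat \<Rightarrow> nat set) \<Rightarrow> (nat \<Rightarrow> complex \<Rightarrow> complex) \<Rightarrow> (nat \<Rightarrow> complex) set" where
  "inv_limit A f = {y. \<forall>i. y i \<in> wedge (A i) \<and> f i (y (Suc i)) = y i}"

definition expansion ::
  "'a::metric_space set \<Rightarrow> (real \<Rightarrow> 'a \<Rightarrow> 'a) \<Rightarrow> 'a \<Rightarrow> (nat \<Rightarrow> nat set) \<Rightarrow>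
   (nat \<Rightarrow> complex \<Rightarrow> complex) \<Rightarrow> (nat \<Rightarrow> 'a \<Rightarrow> complex) \<Rightarrow> bool" where
  "expansion X \<phi> xb A f p \<longleftrightarrow>
     xb \<in> X \<and>
     (\<forall>i. wedge_labels (A i)) \<and>
     (\<forall>i. positive_map (A i) (A (Suc i)) (f i)) \<and>
     (\<forall>i. projection X \<phi> (A i) (p i)) \<and>
     (\<forall>i. p i xb = 0) \<and>
     (\<forall>n m. m > n \<longrightarrow> (\<forall>x\<in>X. p n x = fcomp f n (m - n) (p m x))) \<and>
     (\<exists>g. homeomorphism X (inv_limit A f) (\<lambda>x i. p i x) g)"

end

theory Submission
  imports Defs
begin



lemma wcirc_norm: "cmod (wcirc a x) = 2 * real a * \<bar>sin (pi * x)\<bar>"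
proof -
  have "cmod (1 - cis (2*pi*x)) ^ 2 = (1 - cos (2*pi*x))^2 + (sin (2*pi*x))^2"
    by (simp add: cmod_power2)
  also have "\<dots> = 2 - 2 * cos (2*pi*x)"
    using sin_cos_squared_add[of "2*pi*x"] by (simp add: power2_eq_square algebra_simps)
  also have "\<dots> = (2 * \<bar>sin (pi*x)\<bar>)^2"
    using cos_double_sin[of "pi*x"] by (simp add: power2_eq_square algebra_simps)
  finally have "cmod (1 - cis (2*pi*x)) = 2 * \<bar>sin (pi*x)\<bar>"
    by (metis abs_ge_zero norm_ge_zero power2_eq_imp_eq mult_nonneg_nonneg zero_le_numeral)
  then show ?thesis by (simp add: wcirc_def norm_mult)
qed

lemma wcirc_eq_0: "a \<noteq> 0 \<Longrightarrow> wcirc a x = 0 \<longleftrightarrow> x \<in> \<int>"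
proof -
  assume a: "a \<noteq> 0"
  have "wcirc a x = 0 \<longleftrightarrow> sin (pi * x) = 0"
    using wcirc_norm[of a x] a by (metis abs_eq_0 mult_eq_0_iff norm_eq_zero of_nat_eq_0_iff zero_neq_numeral)
  also have "\<dots> \<longleftrightarrow> x \<in> \<int>"
    by (auto simp: sin_zero_iff_int2 Ints_def)
  finally show ?thesis .
qed

lemma wcirc_int [simp]: "wcirc a (of_int k) = 0"
  by (simp add: wcirc_def)

lemma wcirc_periodic: "wcirc a (x + of_int k) = wcirc a x"
proof -
  have "cis (2*pi*(x + real_of_int k)) = cis (2*pi*x) * cis (2*pi*real_of_int k)"
    by (simp add: cis_mult algebra_simps)
  also have "cis (2*pi*real_of_int k) = 1" by (rule cis_multiple_2pi) simp
  finally show ?thesis by (simp add: wcirc_def)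
qed

lemma continuous_wcirc [continuous_intros]:
  "continuous_on S g \<Longrightarrow> continuous_on S (\<lambda>t. wcirc a (g t))"
  unfolding wcirc_def by (intro continuous_intros)

lemma isCont_wcirc: "isCont (wcirc a) x"
  using continuous_wcirc[OF continuous_on_id, of UNIV a]
  by (simp add: continuous_on_eq_continuous_at)

lemma circle_of_01: "circle_of a = wcirc a ` {0..1}"
proof
  show "circle_of a \<subseteq> wcirc a ` {0..1}"
  proof
    fix z assume "z \<in> circle_of a"
    then obtain x where z: "z = wcirc a x" by (auto simp: circle_of_def)
    have "z = wcirc a (x - of_int \<lfloor>x\<rfloor>)" using wcirc_periodic[of a "x - of_int \<lfloor>x\<rfloor>" "\<lfloor>x\<rfloor>"] z by simp
    moreover have "x - of_int \<lfloor>x\<rfloor> \<in> {0..1}"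
      using frac_lt_1[of x] frac_ge_0[of x] by (simp add: frac_def)
    ultimately show "z \<in> wcirc a ` {0..1}" by blast
  qed
qed (auto simp: circle_of_def)

lemma closed_circle_of: "closed (circle_of a)"
  unfolding circle_of_01
  by (intro compact_imp_closed compact_continuous_image continuous_wcirc continuous_on_id) simp

definition ang :: "nat \<Rightarrow> complex \<Rightarrow> real" where
  "ang a z = Arg2pi (1 - z / of_nat a) / (2*pi)"

lemma ang_wcirc: "a \<noteq> 0 \<Longrightarrow> 0 \<le> x \<Longrightarrow> x < 1 \<Longrightarrow> ang a (wcirc a x) = x"
proof -
  assume a: "a \<noteq> 0" and x: "0 \<le> x" "x < 1"
  have "1 - wcirc a x / of_nat a = cis (2*pi*x)" using a by (simp add: wcirc_def)
  also have "\<dots> = exp (\<i> * complex_of_real (2*pi*x))" by (simp add: cis_conv_exp)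
  moreover have "Arg2pi (exp (\<i> * complex_of_real (2*pi*x))) = 2*pi*x"
    by (subst Arg2pi_exp) (use x in auto)
  ultimately have "Arg2pi (1 - wcirc a x / of_nat a) = 2*pi*x" by simp
  then show ?thesis by (simp add: ang_def)
qed

lemma ang_circle:
  assumes a: "a \<noteq> 0" and z: "z \<in> circle_of a" "z \<noteq> 0"
  shows "0 < ang a z" "ang a z < 1" "wcirc a (ang a z) = z"
proof -
  obtain x where x: "z = wcirc a x" using z by (auto simp: circle_of_def)
  define y where "y = x - of_int \<lfloor>x\<rfloor>"
  have zy: "z = wcirc a y" using wcirc_periodic[of a y "\<lfloor>x\<rfloor>"] x by (simp add: y_def)
  have y01: "0 \<le> y" "y < 1" using frac_lt_1[of x] frac_ge_0[of x] by (auto simp: frac_def y_def)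
  have "y \<noteq> 0" using zy z a by (auto simp: wcirc_def)
  with y01 have "0 < y" by simp
  moreover have "ang a z = y" using ang_wcirc[OF a y01] zy by simp
  ultimately show "0 < ang a z" "ang a z < 1" "wcirc a (ang a z) = z" using y01 zy by auto
qed

lemma ang_cont:
  assumes a: "a \<noteq> 0" and z: "z \<in> circle_of a" "z \<noteq> 0"
  shows "isCont (ang a) z"
proof -
  let ?y = "ang a z"
  have y: "0 < ?y" "?y < 1" "wcirc a ?y = z" using ang_circle[OF assms] by auto
  have "Arg2pi (1 - z / of_nat a) = 2*pi*?y" using y by (simp add: ang_def)
  hence "Arg2pi (1 - z / of_nat a) \<noteq> 0" using y by simp
  hence "1 - z / of_nat a \<notin> \<real>\<^sub>\<ge>\<^sub>0"
    using Arg2pi_eq_0 complex_nonneg_Reals_iff complex_is_Real_iff by (auto simp: Reals_def)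
  hence AC: "isCont Arg2pi (1 - z / of_nat a)" by (rule continuous_at_Arg2pi)
  have c1: "isCont (\<lambda>z::complex. 1 - z / of_nat a) z" by (intro continuous_intros) (use a in auto)
  have "isCont (\<lambda>z. Arg2pi (1 - z / of_nat a)) z"
    using isCont_o2[where f="\<lambda>z. 1 - z / of_nat a" and g=Arg2pi and a=z] AC c1
    by blast
  then show ?thesis unfolding ang_def[abs_def] by (intro continuous_intros) auto
qed

lemma circle_Re_Im: "z \<in> circle_of a \<Longrightarrow> (Re z)^2 - 2 * real a * Re z + (Im z)^2 = 0"
proof -
  assume "z \<in> circle_of a"
  then obtain x where z: "z = wcirc a x" by (auto simp: circle_of_def)
  define u where "u = 2*pi*x"
  have re: "Re z = real a*(1 - cos u)" and im: "Im z = - (real a * sin u)" by (simp_all add: z wcirc_def u_def)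
  have h: "sin u * sin u + cos u * cos u = 1" using sin_cos_squared_add[of u] by (simp add: power2_eq_square)
  have hh: "real a * (real a * (cos u * cos u)) + real a * (real a * (sin u * sin u)) = real a * real a"
  proof -
    have "real a * (real a * (cos u * cos u)) + real a * (real a * (sin u * sin u)) = real a * real a * (sin u * sin u + cos u * cos u)"
      by algebra
    then show ?thesis by (simp only: h mult_1_right)
  qed
  show ?thesis using hh by (simp add: re im power2_eq_square algebra_simps)

qed

lemma circles_meet: "z \<in> circle_of a \<Longrightarrow> z \<in> circle_of b \<Longrightarrow> a \<noteq> b \<Longrightarrow> z = 0"
proof -
  assume 1: "z \<in> circle_of a" and 2: "z \<in> circle_of b" and ab: "a \<noteq> b"
  from circle_Re_Im[OF 1] circle_Re_Im[OF 2]
  have "(real a - real b) * Re z = 0" by (simp add: algebra_simps)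
  hence re: "Re z = 0" using ab by simp
  with circle_Re_Im[OF 1] have "Im z = 0" by simp
  with re show "z = 0" by (simp add: complex_eq_iff)
qed

lemma zero_in_circle [simp]: "0 \<in> circle_of a"
  unfolding circle_of_def using wcirc_int[of a 0] by (metis of_int_0 rangeI)




lemma lp_isCont:
  assumes "locally_positive A g" shows "isCont g t0"
proof -
  obtain e where e: "e > 0"
    and L: "\<exists>a\<in>A. \<exists>\<theta>. continuous_on {t0 - e..t0} \<theta> \<and> strict_mono_on {t0 - e..t0} \<theta> \<and>
                 (\<forall>t\<in>{t0 - e..t0}. g t = wcirc a (\<theta> t))"
    and R: "\<exists>b\<in>A. \<exists>\<theta>. continuous_on {t0..t0 + e} \<theta> \<and> strict_mono_on {t0..t0 + e} \<theta> \<and>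
                 (\<forall>t\<in>{t0..t0 + e}. g t = wcirc b (\<theta> t))"
    using assms unfolding locally_positive_def by blast
  from L obtain a \<theta> where a: "continuous_on {t0 - e..t0} \<theta>" "\<forall>t\<in>{t0 - e..t0}. g t = wcirc a (\<theta> t)" by blast
  from R obtain b \<theta>' where b: "continuous_on {t0..t0+e} \<theta>'" "\<forall>t\<in>{t0..t0+e}. g t = wcirc b (\<theta>' t)" by blast
  have c1: "continuous_on {t0 - e..t0} g"
    using continuous_wcirc[OF a(1), of a] a(2) by (metis (no_types, lifting) continuous_on_cong)
  have c2: "continuous_on {t0..t0+e} g"
    using continuous_wcirc[OF b(1), of b] b(2) by (metis (no_types, lifting) continuous_on_cong)
  have "continuous_on ({t0 - e..t0} \<union> {t0..t0+e}) g"
    by (rule continuous_on_closed_Un[OF _ _ c1 c2]) auto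
  moreover have "{t0 - e..t0} \<union> {t0..t0+e} = {t0-e..t0+e}" using e by auto
  ultimately have "continuous_on {t0-e..t0+e} g" by simp
  then show ?thesis
    by (rule continuous_on_interior) (use e in \<open>simp add: interior_atLeastAtMost_real\<close>)
qed

lemma min_arg:
  fixes \<theta> :: "real \<Rightarrow> real"
  assumes "continuous_on {s..t} \<theta>" "s < t"
    and step: "\<And>u. u \<in> {s<..t} \<Longrightarrow> \<exists>u'\<in>{s..<u}. \<theta> u' < \<theta> u"
  shows "\<theta> s < \<theta> t"
proof -
  obtain u0 where u0: "u0 \<in> {s..t}" "\<forall>y\<in>{s..t}. \<theta> u0 \<le> \<theta> y"
    using continuous_attains_inf[OF compact_Icc _ assms(1)] assms(2) by auto
  have "u0 = s"
  proof (rule ccontr)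
    assume "u0 \<noteq> s"
    then have "u0 \<in> {s<..t}" using u0 by auto
    from step[OF this] obtain u' where "u' \<in> {s..<u0}" "\<theta> u' < \<theta> u0" by blast
    with u0 show False by force
  qed
  from step[of t] assms(2) obtain u' where "u' \<in> {s..<t}" "\<theta> u' < \<theta> t" by auto
  with u0 \<open>u0 = s\<close> show ?thesis by force
qed

lemma lift_mono:
  assumes lp: "locally_positive A g" and A0: "0 \<notin> A" and c: "c \<noteq> 0" and st: "s < t"
    and on: "\<forall>u\<in>{s..t}. g u \<in> circle_of c - {0}"
  shows "ang c (g s) < ang c (g t)"
proof (rule min_arg[of s t "\<lambda>u. ang c (g u)", OF _ st])
  show "continuous_on {s..t} (\<lambda>u. ang c (g u))"
  proof (rule continuous_at_imp_continuous_on, safe)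
    fix u assume "u \<in> {s..t}"
    then have "isCont (ang c) (g u)" using on ang_cont[OF c] by auto
    then show "isCont (\<lambda>u. ang c (g u)) u"
      using isCont_o2[where f=g and g="ang c" and a=u] lp_isCont[OF lp] by blast
  qed
next
  fix u assume u: "u \<in> {s<..t}"
  obtain e where e: "e > 0"
    and L: "\<exists>a\<in>A. \<exists>\<theta>. continuous_on {u - e..u} \<theta> \<and> strict_mono_on {u - e..u} \<theta> \<and>
                 (\<forall>t\<in>{u - e..u}. g t = wcirc a (\<theta> t))"
    using lp unfolding locally_positive_def by blast
  from L obtain a \<theta> where a: "a \<in> A" "continuous_on {u - e..u} \<theta>" "strict_mono_on {u - e..u} \<theta>"
    "\<forall>v\<in>{u - e..u}. g v = wcirc a (\<theta> v)" by blast
  have a0: "a \<noteq> 0" proof assume "a = 0" then show False using a(1) A0 by simp qed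
  have gu: "g u \<in> circle_of c - {0}" using on u by auto
  have "g u \<in> circle_of a" using a(4) e by (auto simp: circle_of_def)
  hence ac: "a = c" using gu circles_meet by blast
  define e' where "e' = min e (u - s)"
  have e': "e' > 0" "e' \<le> e" "e' \<le> u - s" using e u by (auto simp: e'_def)
  define u' where "u' = u - e'/2"
  have u': "u' \<in> {s..<u}" "u' \<in> {u-e..u}" "u \<in> {u-e..u}" using e' e by (auto simp: u'_def)
  define k where "k = \<lfloor>\<theta> u\<rfloor>"
  have nz: "\<And>v. v \<in> {u'..u} \<Longrightarrow> \<theta> v \<notin> \<int>"
  proof -
    fix v assume v: "v \<in> {u'..u}"
    then have "v \<in> {s..t}" "v \<in> {u-e..u}" using u' u by auto
    then have "g v \<noteq> 0" "g v = wcirc c (\<theta> v)" using on a(4) ac by blast+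
    then show "\<theta> v \<notin> \<int>" using wcirc_eq_0[OF c] by auto
  qed
  have ku: "of_int k < \<theta> u" "\<theta> u < of_int k + 1"
  proof -
    have "\<theta> u \<notin> \<int>" using nz[of u] u' by auto
    moreover have k1: "of_int k \<le> \<theta> u" "\<theta> u < of_int k + 1" unfolding k_def by linarith+
    ultimately have "of_int k < \<theta> u" by (metis Ints_of_int order_le_less)
    then show "of_int k < \<theta> u" "\<theta> u < of_int k + 1" using k1 by auto
  qed
  have lt: "\<theta> u' < \<theta> u" using a(3) u' by (auto intro: strict_mono_onD)
  have ku': "of_int k < \<theta> u'"
  proof (rule ccontr)
    assume "\<not> of_int k < \<theta> u'"
    moreover have "continuous_on {u'..u} \<theta>" using u' by (intro continuous_on_subset[OF a(2)]) auto
    ultimately have "\<exists>x\<ge>u'. x \<le> u \<and> \<theta> x = of_int k"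
      using ku u' by (intro IVT') auto
    then obtain w where "u' \<le> w" "w \<le> u" "\<theta> w = of_int k" by blast
    with nz[of w] show False by auto
  qed
  have eq: "\<And>v. v \<in> {u'..u} \<Longrightarrow> of_int k < \<theta> v \<Longrightarrow> \<theta> v < of_int k + 1 \<Longrightarrow> ang c (g v) = \<theta> v - of_int k"
  proof -
    fix v assume v: "v \<in> {u'..u}" "of_int k < \<theta> v" "\<theta> v < of_int k + 1"
    have "g v = wcirc c (\<theta> v)" using a(4) ac v u' by auto
    also have "\<dots> = wcirc c (\<theta> v - of_int k)" using wcirc_periodic[of c "\<theta> v - of_int k" k] by simp
    finally show "ang c (g v) = \<theta> v - of_int k" using ang_wcirc[OF c, of "\<theta> v - of_int k"] v by simp
  qed
  have "ang c (g u') < ang c (g u)"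
    using eq[of u'] eq[of u] ku ku' lt u' by auto
  then show "\<exists>u'\<in>{s..<u}. ang c (g u') < ang c (g u)" using u' by blast
qed




lemma norm_wcirc_inc:
  assumes "0 \<le> x" "x \<le> y" "y \<le> 1/2" shows "cmod (wcirc c x) \<le> cmod (wcirc c y)"
proof -
  have 1: "0 \<le> pi*x" using assms by simp
  have 2: "pi*x \<le> pi*y" using assms by (simp add: mult_left_mono)
  have 3: "pi*y \<le> pi/2" using assms mult_left_mono[of y "1/2" pi] by simp
  have "sin (pi * x) \<le> sin (pi * y)"
    by (rule sin_monotone_2pi_le) (use 1 2 3 pi_gt_zero in linarith)+
  moreover have "0 \<le> sin (pi * x)" using assms by (intro sin_ge_zero) auto
  moreover have "0 \<le> sin (pi * y)" using assms by (intro sin_ge_zero) auto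
  ultimately show ?thesis by (simp add: wcirc_norm mult_left_mono)
qed

lemma norm_wcirc_dec:
  assumes "1/2 \<le> x" "x \<le> y" "y \<le> 1" shows "cmod (wcirc c y) \<le> cmod (wcirc c x)"
proof -
  have 1: "cmod (wcirc c y) = cmod (wcirc c (1 - y))"
    by (simp add: wcirc_norm right_diff_distrib sin_diff)
  have 2: "cmod (wcirc c x) = cmod (wcirc c (1 - x))"
    by (simp add: wcirc_norm right_diff_distrib sin_diff)
  show ?thesis unfolding 1 2 by (rule norm_wcirc_inc) (use assms in auto)
qed

lemma in_wedge: "z \<in> wedge A \<Longrightarrow> \<exists>c\<in>A. z \<in> circle_of c"
  by (auto simp: wedge_def)

lemma conn_circle:
  assumes fin: "finite A" and S: "connected S" "S \<subseteq> wedge A - {0}" and z: "z \<in> S" "z \<in> circle_of c"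
  shows "S \<subseteq> circle_of c"
proof -
  define B where "B = \<Union>(circle_of ` (A - {c}))"
  have cB: "closed B" unfolding B_def using fin closed_circle_of by (intro closed_Union) auto
  have "S \<subseteq> circle_of c \<union> B" using S(2) by (auto simp: B_def wedge_def)
  moreover have "circle_of c \<inter> B \<inter> S = {}"
    using S(2) circles_meet by (fastforce simp: B_def)
  moreover have "circle_of c \<inter> S \<noteq> {}" using z by auto
  ultimately have "B \<inter> S = {}"
    using S(1) closed_circle_of[of c] cB unfolding connected_closed by blast
  with \<open>S \<subseteq> circle_of c \<union> B\<close> show ?thesis by blast
qed

lemma excursion_half:
  assumes lp: "locally_positive A g" and A0: "0 \<notin> A" and c: "c \<noteq> 0" and uv: "u < v"
    and gu: "g u = 0" and gv: "g v = 0" and on: "\<forall>t\<in>{u<..<v}. g t \<in> circle_of c - {0}"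
  shows "\<exists>t\<in>{u<..<v}. g t = wcirc c (1/2)"
proof (rule ccontr)
  assume no: "\<not> ?thesis"
  define \<theta> where "\<theta> t = ang c (g t)" for t
  have th: "\<And>t. t \<in> {u<..<v} \<Longrightarrow> 0 < \<theta> t \<and> \<theta> t < 1 \<and> wcirc c (\<theta> t) = g t"
    using ang_circle[OF c] on by (auto simp: \<theta>_def)
  have mono: "\<And>s t. s \<in> {u<..<v} \<Longrightarrow> t \<in> {u<..<v} \<Longrightarrow> s < t \<Longrightarrow> \<theta> s < \<theta> t"
    unfolding \<theta>_def by (rule lift_mono[OF lp A0 c]) (use on in auto)
  have cont: "continuous_on {u<..<v} \<theta>"
  proof (rule continuous_at_imp_continuous_on, safe)
    fix t assume "t \<in> {u<..<v}"
    then have "isCont (ang c) (g t)" using on ang_cont[OF c] by auto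
    then show "isCont \<theta> t" unfolding \<theta>_def
      using isCont_o2[where f=g and g="ang c" and a=t] lp_isCont[OF lp] by blast
  qed
  have nh: "\<theta> t \<noteq> 1/2" if t: "t \<in> {u<..<v}" for t
  proof
    assume "\<theta> t = 1/2"
    then have "g t = wcirc c (1/2)" using th[OF t] by metis
    then show False using no t by blast
  qed
  define t1 where "t1 = (u + v) / 2"
  have t1: "t1 \<in> {u<..<v}" using uv by (auto simp: t1_def)
  have gt0: "cmod (wcirc c (\<theta> t1)) > 0"
    using th[OF t1] on t1 by auto
  show False
  proof (cases "\<theta> t1 < 1/2")
    case True
    have bnd: "cmod (wcirc c (\<theta> t1)) \<le> cmod (g t)" if t: "t \<in> {t1..<v}" for t
    proof -
      have tin: "t \<in> {u<..<v}" using t t1 by auto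
      have "\<theta> t < 1/2"
      proof (rule ccontr)
        assume "\<not> \<theta> t < 1/2"
        moreover have "continuous_on {t1..t} \<theta>" using t t1 by (intro continuous_on_subset[OF cont]) auto
        ultimately have "\<exists>x\<ge>t1. x \<le> t \<and> \<theta> x = 1/2" using True t by (intro IVT') auto
        then obtain x where "t1 \<le> x" "x \<le> t" "\<theta> x = 1/2" by blast
        with nh[of x] t t1 show False by auto
      qed
      moreover have "\<theta> t1 \<le> \<theta> t" using mono[OF t1 tin] t by (cases "t = t1") auto
      ultimately show ?thesis using norm_wcirc_inc[of "\<theta> t1" "\<theta> t" c] th[OF t1] th[OF tin] by auto
    qed
    obtain d where d: "d > 0" "\<forall>y. dist y v < d \<longrightarrow> dist (g y) (g v) < cmod (wcirc c (\<theta> t1))"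
      using lp_isCont[OF lp, of v] gt0 unfolding continuous_at_eps_delta by blast
    define t where "t = v - min d (v - t1) / 2"
    have "t \<in> {t1..<v}" "dist t v < d" using d t1 unfolding t_def dist_real_def min_def by (auto simp: field_simps)
    with d bnd[of t] gv show False by auto
  next
    case False
    then have F: "\<theta> t1 > 1/2" using nh[OF t1] by auto
    have bnd: "cmod (wcirc c (\<theta> t1)) \<le> cmod (g t)" if t: "t \<in> {u<..t1}" for t
    proof -
      have tin: "t \<in> {u<..<v}" using t t1 by auto
      have "\<theta> t > 1/2"
      proof (rule ccontr)
        assume "\<not> \<theta> t > 1/2"
        moreover have "continuous_on {t..t1} \<theta>" using t t1 by (intro continuous_on_subset[OF cont]) auto
        ultimately have "\<exists>x\<ge>t. x \<le> t1 \<and> \<theta> x = 1/2" using F t by (intro IVT') auto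
        then obtain x where "t \<le> x" "x \<le> t1" "\<theta> x = 1/2" by blast
        with nh[of x] t t1 show False by auto
      qed
      moreover have "\<theta> t \<le> \<theta> t1" using mono[OF tin t1] t by (cases "t = t1") auto
      ultimately show ?thesis using norm_wcirc_dec[of "\<theta> t" "\<theta> t1" c] th[OF t1] th[OF tin] by auto
    qed
    obtain d where d: "d > 0" "\<forall>y. dist y u < d \<longrightarrow> dist (g y) (g u) < cmod (wcirc c (\<theta> t1))"
      using lp_isCont[OF lp, of u] gt0 unfolding continuous_at_eps_delta by blast
    define t where "t = u + min d (t1 - u) / 2"
    have "t \<in> {u<..t1}" "dist t u < d" using d t1 unfolding t_def dist_real_def min_def by (auto simp: field_simps)
    with d bnd[of t] gu show False by auto
  qed
qed




locale flw =
  fixes X :: "'a::metric_space set" and \<phi> :: "real \<Rightarrow> 'a \<Rightarrow> 'a"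
  assumes cpt: "compact X"
    and cont: "continuous_on (UNIV \<times> X) (\<lambda>(t, x). \<phi> t x)"
    and inX: "\<And>t x. x \<in> X \<Longrightarrow> \<phi> t x \<in> X"
    and zero: "\<And>x. x \<in> X \<Longrightarrow> \<phi> 0 x = x"
    and add: "\<And>s t x. x \<in> X \<Longrightarrow> \<phi> (s + t) x = \<phi> s (\<phi> t x)"
begin

lemma flow_tendsto:
  assumes "a \<longlonglongrightarrow> a0" "y \<longlonglongrightarrow> y0" "\<And>j. y j \<in> X" "y0 \<in> X"
  shows "(\<lambda>j. \<phi> (a j) (y j)) \<longlonglongrightarrow> \<phi> a0 y0"
proof -
  have "(\<lambda>j. (\<lambda>(t, x). \<phi> t x) (a j, y j)) \<longlonglongrightarrow> (\<lambda>(t, x). \<phi> t x) (a0, y0)"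
    by (rule continuous_on_tendsto_compose[OF cont]) (use assms in \<open>auto intro: tendsto_Pair\<close>)
  then show ?thesis by simp
qed

lemma p_tendsto:
  assumes "continuous_on X p" "z \<longlonglongrightarrow> z0" "\<And>j. z j \<in> X" "z0 \<in> X"
  shows "(\<lambda>j. p (z j)) \<longlonglongrightarrow> p z0"
  by (rule continuous_on_tendsto_compose[OF assms(1,2,4)]) (use assms(3) in auto)

lemma wl_A0: "wedge_labels A \<Longrightarrow> c \<in> A \<Longrightarrow> c \<noteq> 0"
  by (auto simp: wedge_labels_def)

lemma const_contra:
  assumes "locally_positive A g" "\<And>s. s \<in> {0..1} \<Longrightarrow> g s = z"
  shows False
proof -
  obtain e where e: "e > 0" "inj_on g {0 - e<..<0 + e}"
    using assms(1) unfolding locally_positive_def by blast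
  define s where "s = min (e/2) 1"
  have "s \<in> {0 - e<..<0 + e}" "0 \<in> {0 - e<..<0 + e}" "s \<in> {0..1}" "s \<noteq> 0"
    using e by (auto simp: s_def)
  with assms(2)[of s] assms(2)[of 0] e(2) show False by (auto dest: inj_onD)
qed

lemma ret_fwd:
  assumes wl: "wedge_labels A" and pc: "continuous_on X p" and pX: "p ` X \<subseteq> wedge A"
    and lpX: "\<forall>x\<in>X. locally_positive A (\<lambda>t. p (\<phi> t x))" and x: "x \<in> X" and px: "p x \<noteq> 0"
  shows "\<exists>t>0. p (\<phi> t x) = 0"
proof (rule ccontr)
  assume neg: "\<not> ?thesis"
  define g where "g t = p (\<phi> t x)" for t
  have lp: "locally_positive A g" using lpX x by (simp add: g_def[abs_def])
  have nz: "\<And>t. t \<ge> 0 \<Longrightarrow> g t \<noteq> 0"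
    using neg px zero[OF x] by (auto simp: g_def) (metis less_eq_real_def)
  have A0: "0 \<notin> A" and finA: "finite A" using wl by (auto simp: wedge_labels_def)
  have gw: "\<And>t. g t \<in> wedge A" using pX inX[OF x] by (auto simp: g_def)
  obtain c where c: "c \<in> A" "g 0 \<in> circle_of c" using in_wedge[OF gw[of 0]] by blast
  have c0: "c \<noteq> 0" using c(1) A0 by (metis)
  have gcont: "continuous_on {0..} g" using lp_isCont[OF lp] by (simp add: continuous_at_imp_continuous_on)
  have "g ` {0..} \<subseteq> circle_of c"
    by (rule conn_circle[OF finA connected_continuous_image[OF gcont]])
       (use gw nz c in \<open>auto simp: is_interval_connected\<close>)
  then have on: "\<And>t. t \<ge> 0 \<Longrightarrow> g t \<in> circle_of c - {0}" using nz by auto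
  define \<theta> where "\<theta> t = ang c (g t)" for t
  have th: "\<And>t. t \<ge> 0 \<Longrightarrow> 0 < \<theta> t \<and> \<theta> t < 1 \<and> wcirc c (\<theta> t) = g t"
    using ang_circle[OF c0] on by (auto simp: \<theta>_def)
  have mono: "\<And>s t. 0 \<le> s \<Longrightarrow> s \<le> t \<Longrightarrow> \<theta> s \<le> \<theta> t"
  proof -
    fix s t :: real assume "0 \<le> s" "s \<le> t"
    then show "\<theta> s \<le> \<theta> t"
      using lift_mono[OF lp A0 c0, of s t] on by (cases "s = t") (auto simp: \<theta>_def less_imp_le)
  qed
  define L where "L = Sup (\<theta> ` {0..})"
  have bdd: "bdd_above (\<theta> ` {0..})" using th by (auto intro!: bdd_aboveI[of _ 1] less_imp_le)
  have le: "\<And>t. t \<ge> 0 \<Longrightarrow> \<theta> t \<le> L" unfolding L_def using bdd by (auto intro: cSup_upper)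
  have ex: "\<And>\<epsilon>. \<epsilon> > 0 \<Longrightarrow> \<exists>T\<ge>0. L - \<epsilon> < \<theta> T"
  proof -
    fix \<epsilon> :: real assume "\<epsilon> > 0"
    then have "L - \<epsilon> < Sup (\<theta> ` {0..})" by (simp add: L_def)
    then show "\<exists>T\<ge>0. L - \<epsilon> < \<theta> T" using less_cSup_iff[OF _ bdd] by auto
  qed
  obtain \<omega> r where \<omega>: "\<omega> \<in> X" "strict_mono r" "((\<lambda>j. \<phi> (real j) x) \<circ> r) \<longlonglongrightarrow> \<omega>"
    using seq_compactE[OF compact_imp_seq_compact[OF cpt], of "\<lambda>j. \<phi> (real j) x"] inX[OF x] by blast
  have key: "p (\<phi> s \<omega>) = wcirc c L" if s: "s \<in> {0..1}" for s
  proof -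
    have "(\<lambda>j. \<phi> s (\<phi> (real (r j)) x)) \<longlonglongrightarrow> \<phi> s \<omega>"
      using flow_tendsto[of "\<lambda>j. s" s "\<lambda>j. \<phi> (real (r j)) x" \<omega>] \<omega> inX[OF x] by (auto simp: o_def)
    then have 1: "(\<lambda>j. p (\<phi> s (\<phi> (real (r j)) x))) \<longlonglongrightarrow> p (\<phi> s \<omega>)"
      by (rule p_tendsto[OF pc]) (use inX x \<omega> in auto)
    have eq: "p (\<phi> s (\<phi> (real (r j)) x)) = wcirc c (\<theta> (s + real (r j)))" for j
      using add[OF x, of s "real (r j)"] th[of "s + real (r j)"] s by (auto simp: g_def)
    have "(\<lambda>j. \<theta> (s + real (r j))) \<longlonglongrightarrow> L"
    proof (rule LIMSEQ_I)
      fix \<epsilon> :: real assume "\<epsilon> > 0"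
      then obtain T where T: "T \<ge> 0" "L - \<epsilon> < \<theta> T" using ex by blast
      show "\<exists>no. \<forall>j\<ge>no. norm (\<theta> (s + real (r j)) - L) < \<epsilon>"
      proof (intro exI allI impI)
        fix j assume "nat \<lceil>T\<rceil> \<le> j"
        then have "T \<le> real j" by linarith
        also have "real j \<le> real (r j)" using seq_suble[OF \<omega>(2)] by simp
        finally have "T \<le> s + real (r j)" using s by simp
        then have "\<theta> T \<le> \<theta> (s + real (r j))" "\<theta> (s + real (r j)) \<le> L"
          using mono T le s by auto
        then show "norm (\<theta> (s + real (r j)) - L) < \<epsilon>" using T \<open>\<epsilon> > 0\<close> by auto
      qed
    qed
    then have "(\<lambda>j. wcirc c (\<theta> (s + real (r j)))) \<longlonglongrightarrow> wcirc c L"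
      by (rule isCont_tendsto_compose[OF isCont_wcirc])
    with 1 show ?thesis unfolding eq using LIMSEQ_unique by blast
  qed
  show False using const_contra[OF lpX[rule_format, OF \<omega>(1)] key] .
qed

lemma ret_bwd:
  assumes wl: "wedge_labels A" and pc: "continuous_on X p" and pX: "p ` X \<subseteq> wedge A"
    and lpX: "\<forall>x\<in>X. locally_positive A (\<lambda>t. p (\<phi> t x))" and x: "x \<in> X" and px: "p x \<noteq> 0"
  shows "\<exists>t<0. p (\<phi> t x) = 0"
proof (rule ccontr)
  assume neg: "\<not> ?thesis"
  define g where "g t = p (\<phi> t x)" for t
  have lp: "locally_positive A g" using lpX x by (simp add: g_def[abs_def])
  have nz: "\<And>t. t \<le> 0 \<Longrightarrow> g t \<noteq> 0"
    using neg px zero[OF x] by (auto simp: g_def) (metis less_eq_real_def)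
  have A0: "0 \<notin> A" and finA: "finite A" using wl by (auto simp: wedge_labels_def)
  have gw: "\<And>t. g t \<in> wedge A" using pX inX[OF x] by (auto simp: g_def)
  obtain c where c: "c \<in> A" "g 0 \<in> circle_of c" using in_wedge[OF gw[of 0]] by blast
  have c0: "c \<noteq> 0" using c(1) A0 by (metis)
  have gcont: "continuous_on {..0} g" using lp_isCont[OF lp] by (simp add: continuous_at_imp_continuous_on)
  have "g ` {..0} \<subseteq> circle_of c"
    by (rule conn_circle[OF finA connected_continuous_image[OF gcont]])
       (use gw nz c in \<open>auto simp: is_interval_connected\<close>)
  then have on: "\<And>t. t \<le> 0 \<Longrightarrow> g t \<in> circle_of c - {0}" using nz by auto
  define \<theta> where "\<theta> t = ang c (g t)" for t
  have th: "\<And>t. t \<le> 0 \<Longrightarrow> 0 < \<theta> t \<and> \<theta> t < 1 \<and> wcirc c (\<theta> t) = g t"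
    using ang_circle[OF c0] on by (auto simp: \<theta>_def)
  have mono: "\<And>s t. s \<le> t \<Longrightarrow> t \<le> 0 \<Longrightarrow> \<theta> s \<le> \<theta> t"
  proof -
    fix s t :: real assume "s \<le> t" "t \<le> 0"
    then show "\<theta> s \<le> \<theta> t"
      using lift_mono[OF lp A0 c0, of s t] on by (cases "s = t") (auto simp: \<theta>_def less_imp_le)
  qed
  define L where "L = Inf (\<theta> ` {..0})"
  have bdd: "bdd_below (\<theta> ` {..0})" using th by (auto intro!: bdd_belowI[of _ 0] less_imp_le)
  have le: "\<And>t. t \<le> 0 \<Longrightarrow> L \<le> \<theta> t" unfolding L_def using bdd by (auto intro: cInf_lower)
  have ex: "\<And>\<epsilon>. \<epsilon> > 0 \<Longrightarrow> \<exists>T\<le>0. \<theta> T < L + \<epsilon>"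
  proof -
    fix \<epsilon> :: real assume "\<epsilon> > 0"
    then have "Inf (\<theta> ` {..0}) < L + \<epsilon>" by (simp add: L_def)
    then show "\<exists>T\<le>0. \<theta> T < L + \<epsilon>" using cInf_less_iff[OF _ bdd] by auto
  qed
  obtain \<omega> r where \<omega>: "\<omega> \<in> X" "strict_mono r" "((\<lambda>j. \<phi> (- real j) x) \<circ> r) \<longlonglongrightarrow> \<omega>"
    using seq_compactE[OF compact_imp_seq_compact[OF cpt], of "\<lambda>j. \<phi> (- real j) x"] inX[OF x] by blast
  have key: "p (\<phi> s \<omega>) = wcirc c L" if s: "s \<in> {0..1}" for s
  proof -
    have "(\<lambda>j. \<phi> s (\<phi> (- real (r j)) x)) \<longlonglongrightarrow> \<phi> s \<omega>"
      using flow_tendsto[of "\<lambda>j. s" s "\<lambda>j. \<phi> (- real (r j)) x" \<omega>] \<omega> inX[OF x] by (auto simp: o_def)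
    then have 1: "(\<lambda>j. p (\<phi> s (\<phi> (- real (r j)) x))) \<longlonglongrightarrow> p (\<phi> s \<omega>)"
      by (rule p_tendsto[OF pc]) (use inX x \<omega> in auto)
    have ev: "\<forall>\<^sub>F j in sequentially. p (\<phi> s (\<phi> (- real (r j)) x)) = wcirc c (\<theta> (s - real (r j)))"
    proof (rule eventually_sequentiallyI[of 1])
      fix j :: nat assume "1 \<le> j"
      then have "1 \<le> real (r j)" using seq_suble[OF \<omega>(2), of j] by linarith
      then show "p (\<phi> s (\<phi> (- real (r j)) x)) = wcirc c (\<theta> (s - real (r j)))"
        using add[OF x, of s "- real (r j)"] th[of "s - real (r j)"] s by (auto simp: g_def)
    qed
    have "(\<lambda>j. \<theta> (s - real (r j))) \<longlonglongrightarrow> L"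
    proof (rule LIMSEQ_I)
      fix \<epsilon> :: real assume "\<epsilon> > 0"
      then obtain T where T: "T \<le> 0" "\<theta> T < L + \<epsilon>" using ex by blast
      show "\<exists>no. \<forall>j\<ge>no. norm (\<theta> (s - real (r j)) - L) < \<epsilon>"
      proof (intro exI allI impI)
        fix j assume "nat \<lceil>1 - T\<rceil> \<le> j"
        then have "1 - T \<le> real j" by linarith
        also have "real j \<le> real (r j)" using seq_suble[OF \<omega>(2)] by simp
        finally have "s - real (r j) \<le> T" using s by simp
        then have "\<theta> (s - real (r j)) \<le> \<theta> T" "L \<le> \<theta> (s - real (r j))"
          using mono T le s by auto
        then show "norm (\<theta> (s - real (r j)) - L) < \<epsilon>" using T \<open>\<epsilon> > 0\<close> by auto
      qed
    qed
    then have "(\<lambda>j. wcirc c (\<theta> (s - real (r j)))) \<longlonglongrightarrow> wcirc c L"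
      by (rule isCont_tendsto_compose[OF isCont_wcirc])
    then have "(\<lambda>j. p (\<phi> s (\<phi> (- real (r j)) x))) \<longlonglongrightarrow> wcirc c L"
      by (rule tendsto_cong[OF ev, THEN iffD2])
    with 1 show ?thesis using LIMSEQ_unique by blast
  qed
  show False using const_contra[OF lpX[rule_format, OF \<omega>(1)] key] .
qed

end



context flw begin

lemma cont_t: "x \<in> X \<Longrightarrow> continuous_on UNIV (\<lambda>t. \<phi> t x)"
proof -
  assume x: "x \<in> X"
  have "continuous_on UNIV (\<lambda>t::real. (t, x))" by (intro continuous_intros)
  moreover have "range (\<lambda>t. (t, x)) \<subseteq> UNIV \<times> X" using x by auto
  ultimately show ?thesis using continuous_on_compose2[OF cont, of UNIV "\<lambda>t. (t, x)"] by simp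
qed

lemma per_nat: "x \<in> X \<Longrightarrow> \<phi> q x = x \<Longrightarrow> \<phi> (real n * q) x = x"
proof (induction n)
  case (Suc n)
  have "\<phi> (real (Suc n) * q) x = \<phi> q (\<phi> (real n * q) x)"
    using add[OF Suc.prems(1), of q "real n * q"] by (simp add: algebra_simps)
  then show ?case using Suc by simp
qed (simp add: zero)

lemma per_neg: "x \<in> X \<Longrightarrow> \<phi> q x = x \<Longrightarrow> \<phi> (- q) x = x"
  using add[of x "-q" q] zero[of x] by simp

lemma per_int: "x \<in> X \<Longrightarrow> \<phi> q x = x \<Longrightarrow> \<phi> (real_of_int k * q) x = x"
proof (cases "k \<ge> 0")
  case True
  assume "x \<in> X" "\<phi> q x = x"
  then show ?thesis using per_nat[of x q "nat k"] True by simp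
next
  case False
  assume x: "x \<in> X" "\<phi> q x = x"
  have "\<phi> (real (nat (-k)) * (-q)) x = x" by (rule per_nat[OF x(1) per_neg[OF x]])
  then show ?thesis using False by simp
qed

lemma per_circle:
  assumes nofix: "\<forall>x\<in>X. \<exists>t. \<phi> t x \<noteq> x" and x: "x \<in> X" and T: "T \<noteq> 0" "\<phi> T x = x"
  shows "orbit \<phi> x homeomorphic sphere (0::complex) 1"
proof -
  define P where "P = {t. \<phi> t x = x}"
  have clP: "closed P" unfolding P_def by (rule closed_Collect_eq[OF cont_t[OF x] continuous_on_const])
  define S where "S = {t. t > 0 \<and> \<phi> t x = x}"
  have "\<phi> \<bar>T\<bar> x = x" using T per_neg[OF x, of T] by (cases "T \<ge> 0") auto
  then have Sne: "S \<noteq> {}" using T unfolding S_def by (intro ex_in_conv[THEN iffD1] exI[of _ "\<bar>T\<bar>"]) auto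
  have bdd: "bdd_below S" by (auto simp: S_def intro!: bdd_belowI[of _ 0])
  define T0 where "T0 = Inf S"
  have T0ge: "T0 \<ge> 0" unfolding T0_def using Sne by (intro cInf_greatest) (auto simp: S_def)
  have T0P: "T0 \<in> P"
  proof -
    have "T0 \<in> closure S" unfolding T0_def by (rule closure_contains_Inf[OF Sne bdd])
    also have "closure S \<subseteq> P" using clP by (intro closure_minimal) (auto simp: S_def P_def)
    finally show ?thesis .
  qed
  have T0pos: "T0 > 0"
  proof (rule ccontr)
    assume "\<not> T0 > 0"
    then have T00: "T0 = 0" using T0ge by simp
    have all: "t \<in> P" for t
    proof -
      have "\<exists>y\<in>P. dist y t < \<epsilon>" if e: "\<epsilon> > 0" for \<epsilon>
      proof -
        have "Inf S < \<epsilon>" using T00 e by (simp add: T0_def)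
        then obtain q where q: "q \<in> S" "q < \<epsilon>" using cInf_less_iff[OF Sne bdd] by auto
        define k where "k = \<lfloor>t / q\<rfloor>"
        have qp: "q > 0" "\<phi> q x = x" using q by (auto simp: S_def)
        have "real_of_int k \<le> t / q" "t / q < real_of_int k + 1" unfolding k_def by linarith+
        then have "real_of_int k * q \<le> t" "t < real_of_int k * q + q"
          using qp by (auto simp: field_simps)
        moreover have "real_of_int k * q \<in> P" using per_int[OF x qp(2)] by (simp add: P_def)
        ultimately show ?thesis using q by (intro bexI[of _ "real_of_int k * q"]) (auto simp: dist_real_def)
      qed
      then show ?thesis using closed_approachable[OF clP] by blast
    qed
    then show False using nofix x by (auto simp: P_def)
  qed
  have per: "\<phi> T0 x = x" using T0P by (simp add: P_def)
  have minp: "\<And>t. 0 < t \<Longrightarrow> t < T0 \<Longrightarrow> \<phi> t x \<noteq> x"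
  proof
    fix t assume "0 < t" "t < T0" "\<phi> t x = x"
    then have "t \<in> S" by (simp add: S_def)
    then have "T0 \<le> t" unfolding T0_def using bdd by (rule cInf_lower)
    with \<open>t < T0\<close> show False by simp
  qed
  define \<gamma> where "\<gamma> s = \<phi> (T0 * s) x" for s
  have pth: "path \<gamma>" unfolding path_def \<gamma>_def
    using continuous_on_compose2[OF cont_t[OF x], of "{0..1}" "\<lambda>s. T0 * s"] by (auto intro: continuous_intros)
  have diff: "\<phi> (T0 * t - T0 * s) x = x" if "\<gamma> s = \<gamma> t" for s t
  proof -
    have e: "T0 * t - T0 * s = - (T0 * s) + T0 * t" by simp
    have "\<phi> (T0 * t - T0 * s) x = \<phi> (- (T0 * s)) (\<phi> (T0 * t) x)" unfolding e by (rule add[OF x])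
    also have "\<phi> (T0 * t) x = \<phi> (T0 * s) x" using that by (simp add: \<gamma>_def)
    also have "\<phi> (- (T0 * s)) (\<phi> (T0 * s) x) = x" using add[OF x, of "-(T0 * s)" "T0 * s"] zero[OF x] by simp
    finally show ?thesis .
  qed
  have lf: "loop_free \<gamma>"
    unfolding loop_free_def
  proof (intro ballI impI)
    fix s t :: real assume st: "s \<in> {0..1}" "t \<in> {0..1}" "\<gamma> s = \<gamma> t"
    have aux: "\<And>s t. s \<in> {0..1} \<Longrightarrow> t \<in> {0..1} \<Longrightarrow> \<gamma> s = \<gamma> t \<Longrightarrow> s < t \<Longrightarrow> s = 0 \<and> t = 1"
    proof -
      fix s t :: real assume st: "s \<in> {0..1}" "t \<in> {0..1}" "\<gamma> s = \<gamma> t" "s < t"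
      have d: "\<phi> (T0 * (t - s)) x = x" using diff[OF st(3)] by (simp add: algebra_simps)
      have "0 < T0 * (t - s)" using T0pos st by simp
      moreover have "T0 * (t - s) \<le> T0" using T0pos st mult_left_mono[of "t-s" 1 T0] by auto
      ultimately have "T0 * (t - s) = T0" using minp d by force
      then have "t - s = 1" using T0pos by simp
      then show "s = 0 \<and> t = 1" using st by auto
    qed
    show "s = t \<or> s = 0 \<and> t = 1 \<or> s = 1 \<and> t = 0"
      using aux[OF st] aux[OF st(2,1) st(3)[symmetric]] by (cases s t rule: linorder_cases) auto
  qed
  have img: "path_image \<gamma> = orbit \<phi> x"
  proof
    show "path_image \<gamma> \<subseteq> orbit \<phi> x" by (auto simp: path_image_def \<gamma>_def orbit_def)
    show "orbit \<phi> x \<subseteq> path_image \<gamma>"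
    proof
      fix z assume "z \<in> orbit \<phi> x"
      then obtain t where z: "z = \<phi> t x" by (auto simp: orbit_def)
      define k where "k = \<lfloor>t / T0\<rfloor>"
      define s where "s = t / T0 - real_of_int k"
      have "real_of_int k \<le> t / T0" "t / T0 < real_of_int k + 1" unfolding k_def by linarith+
      then have s01: "s \<in> {0..1}" by (auto simp: s_def)
      have "t = T0 * s + real_of_int k * T0" using T0pos by (simp add: s_def field_simps)
      then have "z = \<phi> (T0 * s) (\<phi> (real_of_int k * T0) x)" using z add[OF x, of "T0 * s" "real_of_int k * T0"] by metis
      also have "\<dots> = \<gamma> s" using per_int[OF x per] by (simp add: \<gamma>_def)
      finally show "z \<in> path_image \<gamma>" using s01 by (auto simp: path_image_def)
    qed
  qed
  have "pathfinish \<gamma> = pathstart \<gamma>" using per zero[OF x] by (simp add: pathfinish_def pathstart_def \<gamma>_def)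
  then show ?thesis
    using homeomorphic_simple_path_image_circle[of \<gamma> 1 0] pth lf img by (simp add: simple_path_def)
qed

end



locale expn = flw +
  fixes A :: "nat \<Rightarrow> nat set" and p :: "nat \<Rightarrow> 'a::metric_space \<Rightarrow> complex"
  assumes wl: "\<And>i. wedge_labels (A i)"
    and pc: "\<And>i. continuous_on X (p i)"
    and pX: "\<And>i. p i ` X = wedge (A i)"
    and lpX: "\<And>i. \<forall>x\<in>X. locally_positive (A i) (\<lambda>t. p i (\<phi> t x))"
begin

lemma A0: "0 \<notin> A i" using wl[of i] by (auto simp: wedge_labels_def)

lemma conv_s:
  assumes "W \<longlonglongrightarrow> v" "\<And>j. W j \<in> X" "v \<in> X"
  shows "(\<lambda>j. p n (\<phi> s (W j))) \<longlonglongrightarrow> p n (\<phi> s v)"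
  using p_tendsto[OF pc, of "\<lambda>j. \<phi> s (W j)" "\<phi> s v"] flow_tendsto[of "\<lambda>j. s" s W v] assms inX by auto

lemma lim_half:
  assumes a0: "a0 \<noteq> 0" and WX: "\<And>j. W j \<in> X" and conv: "W \<longlonglongrightarrow> v" and v: "v \<in> X"
    and half: "\<And>j. p n (W j) = wcirc a0 (1/2)"
  shows "p n v = wcirc a0 (1/2)" "p n v \<noteq> 0"
proof -
  have "(\<lambda>j. p n (W j)) \<longlonglongrightarrow> p n v" by (rule p_tendsto[OF pc conv WX v])
  then show pv: "p n v = wcirc a0 (1/2)" unfolding half using LIMSEQ_unique tendsto_const by blast
  have "(1/2::real) \<notin> \<int>"
  proof
    assume "(1/2::real) \<in> \<int>"
    then obtain k :: int where "1/2 = real_of_int k" by (auto elim: Ints_cases)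
    then have "1 = 2 * real_of_int k" by simp
    then have "1 = 2 * k" by linarith
    then show False by presburger
  qed
  then show "p n v \<noteq> 0" using pv wcirc_eq_0[OF a0, of "1/2"] by auto
qed

lemma bound_fwd:
  assumes a0: "a0 \<noteq> 0" and WX: "\<And>j. W j \<in> X" and conv: "W \<longlonglongrightarrow> v" and v: "v \<in> X"
    and half: "\<And>j. p n (W j) = wcirc a0 (1/2)" and Tmp: "\<And>j. Tm j > 0"
    and on: "\<And>j s. s \<in> {- Tm j<..<Tp j} \<Longrightarrow> p n (\<phi> s (W j)) \<in> circle_of a0 - {0}"
  shows "\<exists>B. \<forall>\<^sub>F j in sequentially. Tp j \<le> B"
proof -
  have pv0: "p n v \<noteq> 0" by (rule lim_half[OF a0 WX conv v half])
  obtain \<tau> where \<tau>: "\<tau> > 0" "p n (\<phi> \<tau> v) = 0"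
    using ret_fwd[OF wl pc _ lpX v pv0] pX by blast
  obtain e where e: "e > 0" "inj_on (\<lambda>t. p n (\<phi> t v)) {\<tau> - e<..<\<tau> + e}"
    using lpX[of n] v unfolding locally_positive_def by blast
  define \<delta> where "\<delta> = e / 2"
  have \<delta>: "\<delta> > 0" using e by (simp add: \<delta>_def)
  have Hne: "p n (\<phi> (\<tau> + \<delta>) v) \<noteq> 0"
  proof
    assume "p n (\<phi> (\<tau> + \<delta>) v) = 0"
    then have "\<tau> + \<delta> = \<tau>" using e \<tau> by (intro inj_onD[OF e(2)]) (auto simp: \<delta>_def)
    then show False using \<delta> by simp
  qed
  define \<epsilon> where "\<epsilon> = cmod (p n (\<phi> (\<tau> + \<delta>) v))"
  have \<epsilon>: "\<epsilon> > 0" using Hne by (simp add: \<epsilon>_def)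
  have ev1: "\<forall>\<^sub>F j in sequentially. dist (p n (\<phi> \<tau> (W j))) (p n (\<phi> \<tau> v)) < \<epsilon>/2"
    using conv_s[OF conv WX v, of n \<tau>] \<epsilon> by (intro tendstoD) auto
  have ev2: "\<forall>\<^sub>F j in sequentially. dist (p n (\<phi> (\<tau>+\<delta>) (W j))) (p n (\<phi> (\<tau>+\<delta>) v)) < \<epsilon>/2"
    using conv_s[OF conv WX v, of n "\<tau>+\<delta>"] \<epsilon> by (intro tendstoD) auto
  have key: "Tp j \<le> \<tau> + \<delta>" if d1: "dist (p n (\<phi> \<tau> (W j))) (p n (\<phi> \<tau> v)) < \<epsilon>/2"
      and d2: "dist (p n (\<phi> (\<tau>+\<delta>) (W j))) (p n (\<phi> (\<tau>+\<delta>) v)) < \<epsilon>/2"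
    for j
  proof (rule ccontr)
    assume big: "\<not> Tp j \<le> \<tau> + \<delta>"
    define G where "G s = p n (\<phi> s (W j))" for s
    have lp: "locally_positive (A n) G" using lpX[of n] WX[of j] by (simp add: G_def[abs_def])
    have onG: "\<forall>s\<in>{0..\<tau>+\<delta>}. G s \<in> circle_of a0 - {0}"
      using on[of _ j] Tmp[of j] big by (auto simp: G_def)
    have 1: "ang a0 (G 0) < ang a0 (G \<tau>)"
      by (rule lift_mono[OF lp A0 a0 \<tau>(1)]) (use onG \<delta> in auto)
    have 2: "ang a0 (G \<tau>) < ang a0 (G (\<tau>+\<delta>))"
      by (rule lift_mono[OF lp A0 a0]) (use onG \<delta> \<tau> in auto)
    have G0: "ang a0 (G 0) = 1/2" using half[of j] zero[OF WX[of j]] ang_wcirc[OF a0, of "1/2"] by (simp add: G_def)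
    have a1: "ang a0 (G (\<tau>+\<delta>)) < 1" "wcirc a0 (ang a0 (G (\<tau>+\<delta>))) = G (\<tau>+\<delta>)"
      using ang_circle[OF a0] onG \<tau> \<delta> by auto
    have a2: "wcirc a0 (ang a0 (G \<tau>)) = G \<tau>" using ang_circle[OF a0] onG \<tau> \<delta> by auto
    have "cmod (G (\<tau>+\<delta>)) \<le> cmod (G \<tau>)"
      using norm_wcirc_dec[of "ang a0 (G \<tau>)" "ang a0 (G (\<tau>+\<delta>))" a0] 1 2 G0 a1 a2 by auto
    moreover have "cmod (G \<tau>) < \<epsilon>/2" using d1 \<tau> by (simp add: G_def dist_norm)
    moreover have "\<epsilon> \<le> cmod (G (\<tau>+\<delta>)) + \<epsilon>/2"
      using d2 norm_triangle_ineq2[of "p n (\<phi> (\<tau>+\<delta>) v)" "G (\<tau>+\<delta>)"]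
      by (simp add: G_def dist_norm \<epsilon>_def norm_minus_commute)
    ultimately show False by linarith
  qed
  have "\<forall>\<^sub>F j in sequentially. Tp j \<le> \<tau> + \<delta>"
    using eventually_conj[OF ev1 ev2] by (rule eventually_mono) (use key in blast)
  then show ?thesis by blast
qed

lemma bound_bwd:
  assumes a0: "a0 \<noteq> 0" and WX: "\<And>j. W j \<in> X" and conv: "W \<longlonglongrightarrow> v" and v: "v \<in> X"
    and half: "\<And>j. p n (W j) = wcirc a0 (1/2)" and Tpp: "\<And>j. Tp j > 0"
    and on: "\<And>j s. s \<in> {- Tm j<..<Tp j} \<Longrightarrow> p n (\<phi> s (W j)) \<in> circle_of a0 - {0}"
  shows "\<exists>B. \<forall>\<^sub>F j in sequentially. Tm j \<le> B"
proof -
  have pv0: "p n v \<noteq> 0" by (rule lim_half[OF a0 WX conv v half])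
  obtain \<tau> where \<tau>: "\<tau> < 0" "p n (\<phi> \<tau> v) = 0"
    using ret_bwd[OF wl pc _ lpX v pv0] pX by blast
  obtain e where e: "e > 0" "inj_on (\<lambda>t. p n (\<phi> t v)) {\<tau> - e<..<\<tau> + e}"
    using lpX[of n] v unfolding locally_positive_def by blast
  define \<delta> where "\<delta> = e / 2"
  have \<delta>: "\<delta> > 0" using e by (simp add: \<delta>_def)
  have Hne: "p n (\<phi> (\<tau> - \<delta>) v) \<noteq> 0"
  proof
    assume "p n (\<phi> (\<tau> - \<delta>) v) = 0"
    then have "\<tau> - \<delta> = \<tau>" using e \<tau> by (intro inj_onD[OF e(2)]) (auto simp: \<delta>_def)
    then show False using \<delta> by simp
  qed
  define \<epsilon> where "\<epsilon> = cmod (p n (\<phi> (\<tau> - \<delta>) v))"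
  have \<epsilon>: "\<epsilon> > 0" using Hne by (simp add: \<epsilon>_def)
  have ev1: "\<forall>\<^sub>F j in sequentially. dist (p n (\<phi> \<tau> (W j))) (p n (\<phi> \<tau> v)) < \<epsilon>/2"
    using conv_s[OF conv WX v, of n \<tau>] \<epsilon> by (intro tendstoD) auto
  have ev2: "\<forall>\<^sub>F j in sequentially. dist (p n (\<phi> (\<tau>-\<delta>) (W j))) (p n (\<phi> (\<tau>-\<delta>) v)) < \<epsilon>/2"
    using conv_s[OF conv WX v, of n "\<tau>-\<delta>"] \<epsilon> by (intro tendstoD) auto
  have key: "Tm j \<le> \<delta> - \<tau>" if d1: "dist (p n (\<phi> \<tau> (W j))) (p n (\<phi> \<tau> v)) < \<epsilon>/2"
      and d2: "dist (p n (\<phi> (\<tau>-\<delta>) (W j))) (p n (\<phi> (\<tau>-\<delta>) v)) < \<epsilon>/2"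
    for j
  proof (rule ccontr)
    assume big: "\<not> Tm j \<le> \<delta> - \<tau>"
    define G where "G s = p n (\<phi> s (W j))" for s
    have lp: "locally_positive (A n) G" using lpX[of n] WX[of j] by (simp add: G_def[abs_def])
    have onG: "\<forall>s\<in>{\<tau>-\<delta>..0}. G s \<in> circle_of a0 - {0}"
      using on[of _ j] Tpp[of j] big by (auto simp: G_def)
    have 1: "ang a0 (G \<tau>) < ang a0 (G 0)"
      by (rule lift_mono[OF lp A0 a0 \<tau>(1)]) (use onG \<delta> in auto)
    have 2: "ang a0 (G (\<tau>-\<delta>)) < ang a0 (G \<tau>)"
      by (rule lift_mono[OF lp A0 a0]) (use onG \<delta> \<tau> in auto)
    have G0: "ang a0 (G 0) = 1/2" using half[of j] zero[OF WX[of j]] ang_wcirc[OF a0, of "1/2"] by (simp add: G_def)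
    have a1: "0 < ang a0 (G (\<tau>-\<delta>))" "wcirc a0 (ang a0 (G (\<tau>-\<delta>))) = G (\<tau>-\<delta>)"
      using ang_circle[OF a0] onG \<tau> \<delta> by auto
    have a2: "wcirc a0 (ang a0 (G \<tau>)) = G \<tau>" using ang_circle[OF a0] onG \<tau> \<delta> by auto
    have "cmod (G (\<tau>-\<delta>)) \<le> cmod (G \<tau>)"
      using norm_wcirc_inc[of "ang a0 (G (\<tau>-\<delta>))" "ang a0 (G \<tau>)" a0] 1 2 G0 a1 a2 by auto
    moreover have "cmod (G \<tau>) < \<epsilon>/2" using d1 \<tau> by (simp add: G_def dist_norm)
    moreover have "\<epsilon> \<le> cmod (G (\<tau>-\<delta>)) + \<epsilon>/2"
      using d2 norm_triangle_ineq2[of "p n (\<phi> (\<tau>-\<delta>) v)" "G (\<tau>-\<delta>)"]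
      by (simp add: G_def dist_norm \<epsilon>_def norm_minus_commute)
    ultimately show False by linarith
  qed
  have "\<forall>\<^sub>F j in sequentially. Tm j \<le> \<delta> - \<tau>"
    using eventually_conj[OF ev1 ev2] by (rule eventually_mono) (use key in blast)
  then show ?thesis by blast
qed

end



lemma half_nz: "a \<noteq> 0 \<Longrightarrow> wcirc a (1/2) \<noteq> 0"
proof -
  assume a: "a \<noteq> 0"
  have "(1/2::real) \<notin> \<int>"
  proof
    assume "(1/2::real) \<in> \<int>"
    then obtain k :: int where "1/2 = real_of_int k" by (auto elim: Ints_cases)
    then have "1 = 2 * real_of_int k" by simp
    then have "1 = 2 * k" by linarith
    then show False by presburger
  qed
  then show ?thesis using wcirc_eq_0[OF a, of "1/2"] by auto
qed

lemma fcomp_zero: "(\<And>i. f i 0 = 0) \<Longrightarrow> fcomp f n k 0 = 0"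
  by (induction k) auto

locale expn2 = expn +
  fixes xb :: "'a::metric_space" and f :: "nat \<Rightarrow> complex \<Rightarrow> complex"
  assumes xbX: "xb \<in> X" and pxb: "\<And>i. p i xb = 0" and f0: "\<And>i. f i 0 = 0"
    and comp: "\<And>n m x. m > n \<Longrightarrow> x \<in> X \<Longrightarrow> p n x = fcomp f n (m - n) (p m x)"
    and injp: "\<And>x y. x \<in> X \<Longrightarrow> y \<in> X \<Longrightarrow> (\<And>i. p i x = p i y) \<Longrightarrow> x = y"
begin

lemma zero_down: "x \<in> X \<Longrightarrow> p m x = 0 \<Longrightarrow> k \<le> m \<Longrightarrow> p k x = 0"
  using comp[of k m x] fcomp_zero[of f, OF f0] by (cases "k = m") auto

lemma construct:
  assumes mn: "m > n" and c: "c \<in> A m" and a0: "a0 \<in> A n"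
    and sw: "\<forall>\<theta>\<in>{0<..<1}. fcomp f n (m - n) (wcirc c \<theta>) \<in> circle_of a0 - {0}"
  shows "\<exists>V Tp Tm. V \<in> X \<and> Tp > 0 \<and> Tm > 0 \<and> p n V = wcirc a0 (1/2) \<and>
           (\<forall>s\<in>{- Tm<..<Tp}. p n (\<phi> s V) \<in> circle_of a0 - {0}) \<and>
           (\<forall>k\<le>m. p k (\<phi> Tp V) = 0 \<and> p k (\<phi> (- Tm) V) = 0)"
proof -
  have c0: "c \<noteq> 0" using c A0[of m] by metis
  have a00: "a0 \<noteq> 0" using a0 A0[of n] by metis
  have "wcirc c (1/2) \<in> wedge (A m)" using c by (auto simp: wedge_def circle_of_def)
  then obtain y where y: "y \<in> X" "p m y = wcirc c (1/2)" using pX[of m] by (metis imageE)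
  define g where "g t = p m (\<phi> t y)" for t
  have lpg: "locally_positive (A m) g" using lpX[of m] y by (simp add: g_def[abs_def])
  have g0: "g 0 \<noteq> 0" using y zero half_nz[OF c0] by (simp add: g_def)
  have gc: "continuous_on UNIV g" using lp_isCont[OF lpg] by (simp add: continuous_at_imp_continuous_on)
  have clZ: "closed {t. g t = 0}" by (rule closed_Collect_eq[OF gc continuous_on_const])
  obtain t1 where t1: "t1 > 0" "g t1 = 0" using ret_fwd[OF wl[of m] pc[of m] equalityD1[OF pX[of m]] lpX[of m] y(1)] g0 y zero by (auto simp: g_def)
  obtain t2 where t2: "t2 < 0" "g t2 = 0" using ret_bwd[OF wl[of m] pc[of m] equalityD1[OF pX[of m]] lpX[of m] y(1)] g0 y zero by (auto simp: g_def)
  define Zp where "Zp = {t. g t = 0} \<inter> {0..}"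
  define Zm where "Zm = {t. g t = 0} \<inter> {..0}"
  have clZp: "closed Zp" unfolding Zp_def using clZ by (intro closed_Int) auto
  have clZm: "closed Zm" unfolding Zm_def using clZ by (intro closed_Int) auto
  have Zpne: "Zp \<noteq> {}" using t1 by (auto simp: Zp_def intro!: exI[of _ t1])
  have Zmne: "Zm \<noteq> {}" using t2 by (auto simp: Zm_def intro!: exI[of _ t2])
  have bZp: "bdd_below Zp" by (auto simp: Zp_def intro!: bdd_belowI[of _ 0])
  have bZm: "bdd_above Zm" by (auto simp: Zm_def intro!: bdd_aboveI[of _ 0])
  define tp where "tp = Inf Zp"
  define tm where "tm = Sup Zm"
  have tpZ: "tp \<in> Zp" using closure_contains_Inf[OF Zpne bZp] clZp by (simp add: tp_def closure_closed)
  have tmZ: "tm \<in> Zm" using closure_contains_Sup[OF Zmne bZm] clZm by (simp add: tm_def closure_closed)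
  have tp: "tp > 0" "g tp = 0" using tpZ g0 by (auto simp: Zp_def less_eq_real_def)
  have tm: "tm < 0" "g tm = 0" using tmZ g0 by (auto simp: Zm_def less_eq_real_def)
  have nzI: "g t \<noteq> 0" if t: "t \<in> {tm<..<tp}" for t
  proof
    assume gt: "g t = 0"
    show False
    proof (cases "t \<ge> 0")
      case True
      then have "t \<in> Zp" using gt by (simp add: Zp_def)
      then have "tp \<le> t" unfolding tp_def using bZp by (rule cInf_lower)
      then show False using t by simp
    next
      case False
      then have "t \<in> Zm" using gt by (simp add: Zm_def)
      then have "t \<le> tm" unfolding tm_def using bZm by (rule cSup_upper)
      then show False using t by simp
    qed
  qed
  have gw: "\<And>t. g t \<in> wedge (A m)" using pX[of m] inX[OF y(1)] by (auto simp: g_def)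
  have "g 0 \<in> circle_of c" using y zero by (auto simp: g_def circle_of_def)
  moreover have "0 \<in> {tm<..<tp}" using tp tm by auto
  ultimately have "g ` {tm<..<tp} \<subseteq> circle_of c"
    using wl[of m] gw nzI
    by (intro conn_circle[where z="g 0" and c=c]) (auto simp: wedge_labels_def intro!: connected_continuous_image[OF continuous_on_subset[OF gc]])
  then have onc: "\<And>t. t \<in> {tm<..<tp} \<Longrightarrow> g t \<in> circle_of c - {0}" using nzI by auto
  define h where "h t = p n (\<phi> t y)" for t
  have hg: "h t = fcomp f n (m - n) (g t)" for t
    using comp[OF mn inX[OF y(1)]] by (simp add: h_def g_def)
  have onh: "h t \<in> circle_of a0 - {0}" if t: "t \<in> {tm<..<tp}" for t
  proof -
    have "0 < ang c (g t)" "ang c (g t) < 1" "wcirc c (ang c (g t)) = g t"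
      using ang_circle[OF c0] onc[OF t] by auto
    then show ?thesis using sw hg[of t] by force
  qed
  have hz: "h tm = 0" "h tp = 0" using hg tm tp fcomp_zero[of f, OF f0] by auto
  have lph: "locally_positive (A n) h" using lpX[of n] y by (simp add: h_def[abs_def])
  obtain u where u: "u \<in> {tm<..<tp}" "h u = wcirc a0 (1/2)"
    using excursion_half[OF lph A0 a00 _ hz(1) hz(2)] onh tm tp by force
  define V where "V = \<phi> u y"
  have VX: "V \<in> X" using inX y by (simp add: V_def)
  have shift: "\<phi> s V = \<phi> (s + u) y" for s using add[OF y(1)] by (simp add: V_def)
  show ?thesis
  proof (rule exI[of _ V], rule exI[of _ "tp - u"], rule exI[of _ "u - tm"], intro conjI)
    show "V \<in> X" by (rule VX)
    show "tp - u > 0" "u - tm > 0" using u by auto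
    show "p n V = wcirc a0 (1/2)" using u zero y by (simp add: V_def h_def)
    show "\<forall>s\<in>{- (u - tm)<..<tp - u}. p n (\<phi> s V) \<in> circle_of a0 - {0}"
      using onh by (auto simp: shift h_def)
    show "\<forall>k\<le>m. p k (\<phi> (tp - u) V) = 0 \<and> p k (\<phi> (- (u - tm)) V) = 0"
    proof (intro allI impI conjI)
      fix k assume k: "k \<le> m"
      have "p m (\<phi> (tp - u) V) = 0" using tp by (simp add: shift g_def)
      then show "p k (\<phi> (tp - u) V) = 0" using zero_down[OF inX[OF VX] _ k] by simp
      have "p m (\<phi> (- (u - tm)) V) = 0" using tm by (simp add: shift g_def)
      then show "p k (\<phi> (- (u - tm)) V) = 0" using zero_down[OF inX[OF VX] _ k] by simp
    qed
  qed
qed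

end



context expn2 begin

lemma final:
  assumes a0: "a0 \<noteq> 0" and VX: "\<And>j. V j \<in> X" and Tpp: "\<And>j. Tp j > 0" and Tmp: "\<And>j. Tm j > 0"
    and half: "\<And>j. p n (V j) = wcirc a0 (1/2)"
    and on: "\<And>j s. s \<in> {- Tm j<..<Tp j} \<Longrightarrow> p n (\<phi> s (V j)) \<in> circle_of a0 - {0}"
    and mm: "\<And>j. mm j \<ge> j"
    and zz: "\<And>j k. k \<le> mm j \<Longrightarrow> p k (\<phi> (Tp j) (V j)) = 0 \<and> p k (\<phi> (- Tm j) (V j)) = 0"
  shows "\<exists>T. T \<noteq> 0 \<and> \<phi> T xb = xb"
proof -
  obtain v r1 where v: "v \<in> X" "strict_mono r1" "(V \<circ> r1) \<longlonglongrightarrow> v"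
    using seq_compactE[OF compact_imp_seq_compact[OF cpt], of V] VX by blast
  have W: "\<And>j. (V \<circ> r1) j \<in> X" using VX by simp
  obtain B1 where B1: "\<forall>\<^sub>F j in sequentially. (Tp \<circ> r1) j \<le> B1"
    using bound_fwd[OF a0 W v(3) v(1), of n "Tm \<circ> r1" "Tp \<circ> r1"] half Tmp on by auto
  obtain B2 where B2: "\<forall>\<^sub>F j in sequentially. (Tm \<circ> r1) j \<le> B2"
    using bound_bwd[OF a0 W v(3) v(1), of n "Tp \<circ> r1" "Tm \<circ> r1"] half Tpp on by auto
  obtain J where J: "\<And>j. j \<ge> J \<Longrightarrow> Tp (r1 j) \<le> B1 \<and> Tm (r1 j) \<le> B2"
    using eventually_conj[OF B1 B2] unfolding eventually_sequentially by auto
  define B where "B = max B1 B2"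
  define q where "q j = (Tp (r1 (j + J)), Tm (r1 (j + J)))" for j
  have qin: "\<And>j. q j \<in> {0..B} \<times> {0..B}"
    using J Tpp Tmp by (auto simp: q_def B_def less_imp_le max.coboundedI1 max.coboundedI2)
  obtain l r2 where l: "l \<in> {0..B} \<times> {0..B}" "strict_mono r2" "(q \<circ> r2) \<longlonglongrightarrow> l"
    using seq_compactE[OF compact_imp_seq_compact[OF compact_Times[OF compact_Icc compact_Icc]], of q] qin
    by blast
  define t1 where "t1 = fst l"
  define t2 where "t2 = snd l"
  have t12: "t1 \<ge> 0" "t2 \<ge> 0" using l(1) by (auto simp: t1_def t2_def)
  define \<rho> where "\<rho> j = r1 (r2 j + J)" for j
  have smJ: "strict_mono (\<lambda>j. r2 j + J)" using l(2) by (simp add: strict_mono_def)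
  have \<rho>ge: "\<And>j. \<rho> j \<ge> j"
  proof -
    fix j
    have "j \<le> r2 j + J" using seq_suble[OF l(2), of j] by simp
    also have "\<dots> \<le> r1 (r2 j + J)" by (rule seq_suble[OF v(2)])
    finally show "\<rho> j \<ge> j" by (simp add: \<rho>_def)
  qed
  have Vc: "(\<lambda>j. V (\<rho> j)) \<longlonglongrightarrow> v"
    using LIMSEQ_subseq_LIMSEQ[OF v(3) smJ] by (simp add: \<rho>_def o_def)
  have Tpc: "(\<lambda>j. Tp (\<rho> j)) \<longlonglongrightarrow> t1"
    using tendsto_fst[OF l(3)] by (simp add: q_def \<rho>_def t1_def o_def)
  have Tmc: "(\<lambda>j. - Tm (\<rho> j)) \<longlonglongrightarrow> - t2"
    using tendsto_minus[OF tendsto_snd[OF l(3)]] by (simp add: q_def \<rho>_def t2_def o_def)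
  have lim0: "p k y = 0" if yc: "(\<lambda>j. \<phi> (a j) (V (\<rho> j))) \<longlonglongrightarrow> y" and yX: "y \<in> X"
    and ev: "\<And>j. k \<le> j \<Longrightarrow> p k (\<phi> (a j) (V (\<rho> j))) = 0" for k a y
  proof -
    have 1: "(\<lambda>j. p k (\<phi> (a j) (V (\<rho> j)))) \<longlonglongrightarrow> p k y"
      by (rule p_tendsto[OF pc yc _ yX]) (use inX VX in auto)
    have "\<forall>\<^sub>F j in sequentially. p k (\<phi> (a j) (V (\<rho> j))) = 0"
      using ev unfolding eventually_sequentially by blast
    then have "(\<lambda>j. p k (\<phi> (a j) (V (\<rho> j)))) \<longlonglongrightarrow> 0"
      by (rule tendsto_cong[THEN iffD2]) (rule tendsto_const)
    with 1 show ?thesis using LIMSEQ_unique by blast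
  qed
  have y1: "\<phi> t1 v = xb"
  proof (rule injp[OF inX[OF v(1)] xbX])
    fix k
    have "p k (\<phi> t1 v) = 0"
    proof (rule lim0[of "\<lambda>j. Tp (\<rho> j)"])
      show "(\<lambda>j. \<phi> (Tp (\<rho> j)) (V (\<rho> j))) \<longlonglongrightarrow> \<phi> t1 v"
        by (rule flow_tendsto[OF Tpc Vc VX v(1)])
      show "\<phi> t1 v \<in> X" using inX v by simp
      fix j assume "k \<le> j"
      then have "k \<le> mm (\<rho> j)" using \<rho>ge[of j] mm[of "\<rho> j"] by linarith
      then show "p k (\<phi> (Tp (\<rho> j)) (V (\<rho> j))) = 0" using zz by blast
    qed
    then show "p k (\<phi> t1 v) = p k xb" using pxb by simp
  qed
  have y2: "\<phi> (- t2) v = xb"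
  proof (rule injp[OF inX[OF v(1)] xbX])
    fix k
    have "p k (\<phi> (- t2) v) = 0"
    proof (rule lim0[of "\<lambda>j. - Tm (\<rho> j)"])
      show "(\<lambda>j. \<phi> (- Tm (\<rho> j)) (V (\<rho> j))) \<longlonglongrightarrow> \<phi> (- t2) v"
        by (rule flow_tendsto[OF Tmc Vc VX v(1)])
      show "\<phi> (- t2) v \<in> X" using inX v by simp
      fix j assume "k \<le> j"
      then have "k \<le> mm (\<rho> j)" using \<rho>ge[of j] mm[of "\<rho> j"] by linarith
      then show "p k (\<phi> (- Tm (\<rho> j)) (V (\<rho> j))) = 0" using zz by blast
    qed
    then show "p k (\<phi> (- t2) v) = p k xb" using pxb by simp
  qed
  have t1nz: "t1 \<noteq> 0"
  proof
    assume "t1 = 0"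
    then have "v = xb" using y1 zero[OF v(1)] by simp
    moreover have "p n v \<noteq> 0"
      by (rule lim_half(2)[OF a0 _ Vc v(1)]) (use VX half in auto)
    ultimately show False using pxb by simp
  qed
  have "\<phi> (t1 + t2) xb = xb"
  proof -
    have "\<phi> (t1 + t2) xb = \<phi> t1 (\<phi> t2 (\<phi> (- t2) v))"
      using add[OF xbX] y2 by simp
    also have "\<phi> t2 (\<phi> (- t2) v) = \<phi> (t2 + - t2) v" using add[OF v(1), of t2 "- t2"] by simp
    also have "\<dots> = v" using zero[OF v(1)] by simp
    finally show ?thesis using y1 by simp
  qed
  moreover have "t1 + t2 \<noteq> 0" using t1nz t12 by linarith
  ultimately show ?thesis by blast
qed

end



theorem lemma3p3:
  fixes X :: "'a::metric_space set" and \<phi> :: "real \<Rightarrow> 'a \<Rightarrow> 'a" and xb :: 'a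
    and A :: "nat \<Rightarrow> nat set" and f :: "nat \<Rightarrow> complex \<Rightarrow> complex"
    and p :: "nat \<Rightarrow> 'a \<Rightarrow> complex"
  assumes "flow_space X \<phi>"
    and "expansion X \<phi> xb A f p"
    and "\<exists>n. \<forall>m>n. degenerate_proper (A n) (A m) (fcomp f n (m - n))"
  shows "\<exists>x\<in>X. orbit \<phi> x homeomorphic sphere (0::complex) 1"
proof -
  have fs: "compact X" "continuous_on (UNIV \<times> X) (\<lambda>(t, x). \<phi> t x)"
    "\<forall>t. \<forall>x\<in>X. \<phi> t x \<in> X" "\<forall>x\<in>X. \<phi> 0 x = x" "\<forall>s t. \<forall>x\<in>X. \<phi> (s + t) x = \<phi> s (\<phi> t x)"
    and nofix: "\<forall>x\<in>X. \<exists>t. \<phi> t x \<noteq> x"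
    using assms(1) unfolding flow_space_def by auto
  interpret flw X \<phi> using fs by unfold_locales auto
  have ex: "xb \<in> X" "\<forall>i. wedge_labels (A i)" "\<forall>i. positive_map (A i) (A (Suc i)) (f i)"
    "\<forall>i. projection X \<phi> (A i) (p i)" "\<forall>i. p i xb = 0"
    "\<forall>n m. m > n \<longrightarrow> (\<forall>x\<in>X. p n x = fcomp f n (m - n) (p m x))"
    "\<exists>g. homeomorphism X (inv_limit A f) (\<lambda>x i. p i x) g"
    using assms(2) unfolding expansion_def by auto
  obtain hg where hg: "homeomorphism X (inv_limit A f) (\<lambda>x i. p i x) hg" using ex(7) by blast
  interpret expn2 X \<phi> A p xb f
  proof (unfold_locales)
    show "\<And>i. wedge_labels (A i)" using ex(2) by blast
    show "\<And>i. continuous_on X (p i)" "\<And>i. p i ` X = wedge (A i)"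
      "\<And>i. \<forall>x\<in>X. locally_positive (A i) (\<lambda>t. p i (\<phi> t x))"
      using ex(4) unfolding projection_def by auto
    show "xb \<in> X" "\<And>i. p i xb = 0" using ex by auto
    show "\<And>i. f i 0 = 0" using ex(3) unfolding positive_map_def by auto
    show "\<And>n m x. m > n \<Longrightarrow> x \<in> X \<Longrightarrow> p n x = fcomp f n (m - n) (p m x)" using ex(6) by blast
    fix x y assume xy: "x \<in> X" "y \<in> X" "\<And>i. p i x = p i y"
    have "(\<lambda>i. p i x) = (\<lambda>i. p i y)" using xy(3) by auto
    then show "x = y" using homeomorphism_apply1[OF hg xy(1)] homeomorphism_apply1[OF hg xy(2)] by metis
  qed
  obtain n where n: "\<forall>m>n. degenerate_proper (A n) (A m) (fcomp f n (m - n))" using assms(3) by blast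
  define P where "P m a = (a \<in> A n \<and> (\<exists>b\<in>A m. sym_word (fcomp f n (m - n)) b [a]))" for m a
  define aa where "aa m = (SOME a. P m a)" for m
  have Paa: "P m (aa m)" if "m > n" for m
  proof -
    have "\<exists>a. P m a" using n that unfolding degenerate_proper_def P_def by blast
    then show ?thesis unfolding aa_def by (rule someI_ex)
  qed
  have finA: "finite (A n)" using wl[of n] by (simp add: wedge_labels_def)
  have "aa ` {n<..} \<subseteq> A n" using Paa by (auto simp: P_def)
  then have fin: "finite (aa ` {n<..})" using finA finite_subset by blast
  have inf: "infinite {n<..}" by (simp add: infinite_Ioi)
  obtain a0 where a0: "a0 \<in> aa ` {n<..}" "infinite (aa -` {a0} \<inter> {n<..})"
    using inf_img_fin_domE'[OF fin inf] by blast
  define M where "M = aa -` {a0} \<inter> {n<..}"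
  have a0A: "a0 \<in> A n" using a0(1) Paa by (auto simp: P_def)
  have a00: "a0 \<noteq> 0" using a0A A0[of n] by metis
  have big: "\<exists>m. m \<ge> j \<and> m \<in> M" for j
    using a0(2) unfolding M_def infinite_nat_iff_unbounded_le by blast
  define Q where "Q j m V Tp Tm \<longleftrightarrow> m \<ge> j \<and> V \<in> X \<and> Tp > 0 \<and> Tm > 0 \<and> p n V = wcirc a0 (1/2) \<and>
           (\<forall>s\<in>{- Tm<..<Tp}. p n (\<phi> s V) \<in> circle_of a0 - {0}) \<and>
           (\<forall>k\<le>m. p k (\<phi> Tp V) = 0 \<and> p k (\<phi> (- Tm) V) = 0)" for j m V Tp Tm
  have cons: "\<exists>m V Tp Tm. Q j m V Tp Tm" for j
  proof -
    obtain m where m: "m \<ge> j" "m \<in> M" using big by blast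
    have mn: "m > n" and am: "aa m = a0" using m by (auto simp: M_def)
    obtain c where c: "c \<in> A m" "sym_word (fcomp f n (m - n)) c [a0]"
      using Paa[OF mn] am by (auto simp: P_def)
    obtain s :: "nat \<Rightarrow> real" where s: "s 0 = 0" "s 1 = 1"
      "\<forall>j<1. \<forall>\<theta>\<in>{s j<..<s (Suc j)}. fcomp f n (m - n) (wcirc c \<theta>) \<in> circle_of ([a0] ! j) - {0}"
      using c(2) unfolding sym_word_def by auto
    have sw: "\<forall>\<theta>\<in>{0<..<1}. fcomp f n (m - n) (wcirc c \<theta>) \<in> circle_of a0 - {0}"
      using s by auto
    show ?thesis using construct[OF mn c(1) a0A sw] m(1) unfolding Q_def by blast
  qed
  define mm where "mm j = (SOME m. \<exists>V Tp Tm. Q j m V Tp Tm)" for j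
  have 1: "\<exists>V Tp Tm. Q j (mm j) V Tp Tm" for j unfolding mm_def by (rule someI_ex) (rule cons)
  define V where "V j = (SOME V. \<exists>Tp Tm. Q j (mm j) V Tp Tm)" for j
  have 2: "\<exists>Tp Tm. Q j (mm j) (V j) Tp Tm" for j unfolding V_def by (rule someI_ex) (rule 1)
  define Tp where "Tp j = (SOME Tp. \<exists>Tm. Q j (mm j) (V j) Tp Tm)" for j
  have 3: "\<exists>Tm. Q j (mm j) (V j) (Tp j) Tm" for j unfolding Tp_def by (rule someI_ex) (rule 2)
  define Tm where "Tm j = (SOME Tm. Q j (mm j) (V j) (Tp j) Tm)" for j
  have FF: "Q j (mm j) (V j) (Tp j) (Tm j)" for j unfolding Tm_def by (rule someI_ex) (rule 3)
  have FF': "mm j \<ge> j" "V j \<in> X" "Tp j > 0" "Tm j > 0" "p n (V j) = wcirc a0 (1/2)"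
    "\<And>s. s\<in>{- Tm j<..<Tp j} \<Longrightarrow> p n (\<phi> s (V j)) \<in> circle_of a0 - {0}"
    "\<And>k. k\<le>mm j \<Longrightarrow> p k (\<phi> (Tp j) (V j)) = 0 \<and> p k (\<phi> (- Tm j) (V j)) = 0" for j
    using FF[of j] unfolding Q_def by auto
  have "\<exists>T. T \<noteq> 0 \<and> \<phi> T xb = xb"
    by (rule final[OF a00, of V Tp Tm n mm]) (use FF' in auto)
  then obtain T where T: "T \<noteq> 0" "\<phi> T xb = xb" by blast
  show ?thesis using per_circle[OF nofix xbX T] xbX by blast
qed



end
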